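(* Let $\mathscr Q_n$ be a non-singular quadric in $\mathrm{PG}(n,2)$ of projective index $g\ge1$, let $0\le s<g$, let $\alpha_s$ be an $s$-dimensional subspace contained in $\mathscr Q_n$, and let $\Gamma_s$ be the graph constructed from $\alpha_s$ as described below. If $\mathcal C$ is a clique of $\Gamma_s$ with $2^{g+1}-1$ vertices containing no vertex of type (iii), then $\mathcal C$ is the point set of a generator of $\mathscr Q_n$ containing $\alpha_s$.
   Context: A non-singular quadric $\mathscr Q_n$ in $\mathrm{PG}(n,2)$ is the point set of a non-degenerate quadric; its projective index $g$ is the largest dimension of a projective subspace contained in $\mathscr Q_n$, and the $g$-dimensional subspaces contained in $\mathscr Q_n$ are its generators. The point-graph $\Gamma$ has vertex set the points of $\mathscr Q_n$, two distinct points adjacent iff the line joining them is contained in $\mathscr Q_n$. A point $X$ of $\mathscr Q_n$ has type (i) if $X\in\alpha_s$; type (ii) if $X\notin\alpha_s$ and $\langle\alpha_s,X\rangle\subseteq\mathscr Q_n$; type (iii) otherwise. Let $\mathcal X_s$ be the type (ii) points and $\mathcal Y_s$ the points of type (i) or (iii). The graph $\Gamma_s$ has the same vertex set as $\Gamma$ and the same edges, except that for each vertex $R\in\mathcal Y_s$ having exactly $\frac12|\mathcal X_s|$ neighbours in $\mathcal X_s$ (in $\Gamma$), those edges are deleted and $R$ is joined instead to the other $\frac12|\mathcal X_s|$ vertices of $\mathcal X_s$. *)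

theory Defs
  imports Main
begin

text \<open>Model of PG(n,2): the underlying vector space GF(2)^(n+1) is represented by
  functions nat => bool vanishing outside the index range 0..n; addition is pointwise
  exclusive or. Since GF(2) has the single nonzero scalar 1, the points of PG(n,2)
  are exactly the nonzero vectors.\<close>

definition vecs :: "nat \<Rightarrow> (nat \<Rightarrow> bool) set" where
  "vecs n = {v. \<forall>i>n. \<not> v i}"

definition vzero :: "nat \<Rightarrow> bool" where
  "vzero = (\<lambda>i. False)"

definition vadd :: "(nat \<Rightarrow> bool) \<Rightarrow> (nat \<Rightarrow> bool) \<Rightarrow> (nat \<Rightarrow> bool)" where
  "vadd u v = (\<lambda>i. u i \<noteq> v i)"

definition pg_points :: "nat \<Rightarrow> (nat \<Rightarrow> bool) set" where
  "pg_points n = vecs n - {vzero}"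

text \<open>Linear subspaces of GF(2)^(n+1) (over GF(2), closure under addition suffices).\<close>
definition lin_subspace :: "nat \<Rightarrow> (nat \<Rightarrow> bool) set \<Rightarrow> bool" where
  "lin_subspace n W \<longleftrightarrow> W \<subseteq> vecs n \<and> vzero \<in> W \<and> (\<forall>u\<in>W. \<forall>v\<in>W. vadd u v \<in> W)"

text \<open>Point set of a projective subspace of dimension d of PG(n,2):
  the nonzero vectors of a linear subspace of vector dimension d+1
  (equivalently of cardinality 2^(d+1)).\<close>
definition proj_subspace :: "nat \<Rightarrow> nat \<Rightarrow> (nat \<Rightarrow> bool) set \<Rightarrow> bool" where
  "proj_subspace n d S \<longleftrightarrow> lin_subspace n (insert vzero S) \<and> vzero \<notin> S
     \<and> card (insert vzero S) = 2 ^ (d + 1)"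

definition proj_span :: "nat \<Rightarrow> (nat \<Rightarrow> bool) set \<Rightarrow> (nat \<Rightarrow> bool) set" where
  "proj_span n S = \<Inter>{W. lin_subspace n W \<and> S \<subseteq> W} - {vzero}"

definition qform :: "nat \<Rightarrow> (nat \<Rightarrow> nat \<Rightarrow> bool) \<Rightarrow> (nat \<Rightarrow> bool) \<Rightarrow> bool" where
  "qform n a v = odd (card {(i, j). i \<le> j \<and> j \<le> n \<and> a i j \<and> v i \<and> v j})"

definition polar :: "nat \<Rightarrow> (nat \<Rightarrow> nat \<Rightarrow> bool) \<Rightarrow> (nat \<Rightarrow> bool) \<Rightarrow> (nat \<Rightarrow> bool) \<Rightarrow> bool" where
  "polar n a u v = (qform n a (vadd u v) \<noteq> (qform n a u \<noteq> qform n a v))"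

definition quadric :: "nat \<Rightarrow> (nat \<Rightarrow> nat \<Rightarrow> bool) \<Rightarrow> (nat \<Rightarrow> bool) set" where
  "quadric n a = {v \<in> pg_points n. \<not> qform n a v}"

definition nonsingular :: "nat \<Rightarrow> (nat \<Rightarrow> nat \<Rightarrow> bool) \<Rightarrow> bool" where
  "nonsingular n a \<longleftrightarrow> \<not> (\<exists>v\<in>quadric n a. \<forall>w\<in>vecs n. \<not> polar n a v w)"

definition proj_index :: "nat \<Rightarrow> (nat \<Rightarrow> nat \<Rightarrow> bool) \<Rightarrow> nat" where
  "proj_index n a = (GREATEST d. \<exists>S. proj_subspace n d S \<and> S \<subseteq> quadric n a)"

definition generator :: "nat \<Rightarrow> (nat \<Rightarrow> nat \<Rightarrow> bool) \<Rightarrow> (nat \<Rightarrow> bool) set \<Rightarrow> bool" where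
  "generator n a S \<longleftrightarrow> proj_subspace n (proj_index n a) S \<and> S \<subseteq> quadric n a"

text \<open>Point graph: distinct points X, Y of the quadric are adjacent iff the line
  joining them, {X, Y, X+Y}, is contained in the quadric.\<close>
definition qadj :: "nat \<Rightarrow> (nat \<Rightarrow> nat \<Rightarrow> bool) \<Rightarrow> (nat \<Rightarrow> bool) \<Rightarrow> (nat \<Rightarrow> bool) \<Rightarrow> bool" where
  "qadj n a X Y \<longleftrightarrow> X \<in> quadric n a \<and> Y \<in> quadric n a \<and> X \<noteq> Y
     \<and> proj_span n {X, Y} \<subseteq> quadric n a"

definition type_i :: "nat \<Rightarrow> (nat \<Rightarrow> nat \<Rightarrow> bool) \<Rightarrow> (nat \<Rightarrow> bool) set \<Rightarrow> (nat \<Rightarrow> bool) \<Rightarrow> bool" where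
  "type_i n a \<alpha> X \<longleftrightarrow> X \<in> quadric n a \<and> X \<in> \<alpha>"

definition type_ii :: "nat \<Rightarrow> (nat \<Rightarrow> nat \<Rightarrow> bool) \<Rightarrow> (nat \<Rightarrow> bool) set \<Rightarrow> (nat \<Rightarrow> bool) \<Rightarrow> bool" where
  "type_ii n a \<alpha> X \<longleftrightarrow> X \<in> quadric n a \<and> X \<notin> \<alpha> \<and> proj_span n (insert X \<alpha>) \<subseteq> quadric n a"

definition type_iii :: "nat \<Rightarrow> (nat \<Rightarrow> nat \<Rightarrow> bool) \<Rightarrow> (nat \<Rightarrow> bool) set \<Rightarrow> (nat \<Rightarrow> bool) \<Rightarrow> bool" where
  "type_iii n a \<alpha> X \<longleftrightarrow> X \<in> quadric n a \<and> \<not> type_i n a \<alpha> X \<and> \<not> type_ii n a \<alpha> X"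

definition Xs :: "nat \<Rightarrow> (nat \<Rightarrow> nat \<Rightarrow> bool) \<Rightarrow> (nat \<Rightarrow> bool) set \<Rightarrow> (nat \<Rightarrow> bool) set" where
  "Xs n a \<alpha> = {X. type_ii n a \<alpha> X}"

definition Ys :: "nat \<Rightarrow> (nat \<Rightarrow> nat \<Rightarrow> bool) \<Rightarrow> (nat \<Rightarrow> bool) set \<Rightarrow> (nat \<Rightarrow> bool) set" where
  "Ys n a \<alpha> = {X. type_i n a \<alpha> X \<or> type_iii n a \<alpha> X}"

definition switched :: "nat \<Rightarrow> (nat \<Rightarrow> nat \<Rightarrow> bool) \<Rightarrow> (nat \<Rightarrow> bool) set \<Rightarrow> (nat \<Rightarrow> bool) \<Rightarrow> bool" where
  "switched n a \<alpha> R \<longleftrightarrow> R \<in> Ys n a \<alpha>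
     \<and> 2 * card {X \<in> Xs n a \<alpha>. qadj n a R X} = card (Xs n a \<alpha>)"

definition gs_adj :: "nat \<Rightarrow> (nat \<Rightarrow> nat \<Rightarrow> bool) \<Rightarrow> (nat \<Rightarrow> bool) set \<Rightarrow> (nat \<Rightarrow> bool) \<Rightarrow> (nat \<Rightarrow> bool) \<Rightarrow> bool" where
  "gs_adj n a \<alpha> X Y \<longleftrightarrow> X \<in> quadric n a \<and> Y \<in> quadric n a \<and> X \<noteq> Y \<and>
     (if (switched n a \<alpha> X \<and> Y \<in> Xs n a \<alpha>) \<or> (switched n a \<alpha> Y \<and> X \<in> Xs n a \<alpha>)
      then \<not> qadj n a X Y else qadj n a X Y)"

definition gs_clique :: "nat \<Rightarrow> (nat \<Rightarrow> nat \<Rightarrow> bool) \<Rightarrow> (nat \<Rightarrow> bool) set \<Rightarrow> (nat \<Rightarrow> bool) set \<Rightarrow> bool" where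
  "gs_clique n a \<alpha> C \<longleftrightarrow> C \<subseteq> quadric n a \<and> (\<forall>X\<in>C. \<forall>Y\<in>C. X \<noteq> Y \<longrightarrow> gs_adj n a \<alpha> X Y)"

end

theory Submission
  imports Defs
begin

lemma vadd_zero_iff: "vadd x y = vzero \<longleftrightarrow> x = y"
  by (auto simp: vadd_def vzero_def fun_eq_iff)

lemma vadd_self[simp]: "vadd x x = vzero"
  by (simp add: vadd_zero_iff)

lemma vadd_assoc: "vadd (vadd x y) z = vadd x (vadd y z)"
  by (auto simp: vadd_def fun_eq_iff)

lemma vadd_cancel: "vadd x (vadd x y) = y"
  by (auto simp: vadd_def fun_eq_iff)

lemma vadd_cancel2: "vadd (vadd x y) (vadd x z) = vadd y z"
  by (auto simp: vadd_def fun_eq_iff)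

lemma vadd_vecs: "x \<in> vecs n \<Longrightarrow> y \<in> vecs n \<Longrightarrow> vadd x y \<in> vecs n"
  by (auto simp: vadd_def vecs_def)

lemma vzero_vecs: "vzero \<in> vecs n"
  by (simp add: vzero_def vecs_def)

lemma finite_vecs: "finite (vecs n)"
proof -
  have "vecs n \<subseteq> (\<lambda>A i. i \<in> A) ` Pow {..n}"
  proof
    fix v assume "v \<in> vecs n"
    then have "v = (\<lambda>i. i \<in> {i. i \<le> n \<and> v i})" by (auto simp: vecs_def fun_eq_iff) (meson not_less)
    then show "v \<in> (\<lambda>A i. i \<in> A) ` Pow {..n}"
      by (rule image_eqI) auto
  qed
  then show ?thesis by (rule finite_subset) auto
qed

definition par :: "'a set \<Rightarrow> ('a \<Rightarrow> bool) \<Rightarrow> bool" where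
  "par P f = odd (card {p\<in>P. f p})"

lemma par_insert: "finite P \<Longrightarrow> x \<notin> P \<Longrightarrow> par (insert x P) f = (f x \<noteq> par P f)"
proof -
  assume fin: "finite P" and x: "x \<notin> P"
  show ?thesis
  proof (cases "f x")
    case True
    then have "{p\<in>insert x P. f p} = insert x {p\<in>P. f p}" by auto
    moreover have "card (insert x {p\<in>P. f p}) = Suc (card {p\<in>P. f p})"
      using fin x by (intro card_insert_disjoint) auto
    ultimately show ?thesis using True by (simp add: par_def)
  next
    case False
    then have "{p\<in>insert x P. f p} = {p\<in>P. f p}" by auto
    then show ?thesis using False by (simp add: par_def)
  qed
qed

lemma par_empty: "par {} f = False"
  by (simp add: par_def)

lemma par_xor: "finite P \<Longrightarrow> par P (\<lambda>p. f p \<noteq> g p) = (par P f \<noteq> par P g)"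
  by (induction P rule: finite_induct) (auto simp: par_empty par_insert)

lemma par_cong: "(\<And>p. p \<in> P \<Longrightarrow> f p = g p) \<Longrightarrow> par P f = par P g"
proof -
  assume "\<And>p. p \<in> P \<Longrightarrow> f p = g p"
  then have "{p\<in>P. f p} = {p\<in>P. g p}" by auto
  then show ?thesis by (simp add: par_def)
qed

definition Pset :: "nat \<Rightarrow> (nat \<Rightarrow> nat \<Rightarrow> bool) \<Rightarrow> (nat \<times> nat) set" where
  "Pset n a = {(i, j). i \<le> j \<and> j \<le> n \<and> a i j}"

lemma finite_Pset: "finite (Pset n a)"
proof -
  have "Pset n a \<subseteq> {..n} \<times> {..n}" by (auto simp: Pset_def)
  then show ?thesis by (rule finite_subset) auto
qed

lemma qform_par: "qform n a v = par (Pset n a) (\<lambda>(i,j). v i \<and> v j)"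
proof -
  have "{(i, j). i \<le> j \<and> j \<le> n \<and> a i j \<and> v i \<and> v j} = {p\<in>Pset n a. (\<lambda>(i,j). v i \<and> v j) p}"
    by (auto simp: Pset_def)
  then show ?thesis by (simp add: qform_def par_def)
qed

definition Bf :: "nat \<Rightarrow> (nat \<Rightarrow> nat \<Rightarrow> bool) \<Rightarrow> (nat \<Rightarrow> bool) \<Rightarrow> (nat \<Rightarrow> bool) \<Rightarrow> bool" where
  "Bf n a u v = par (Pset n a) (\<lambda>(i,j). (u i \<and> v j) \<noteq> (v i \<and> u j))"

lemma qform_add: "qform n a (vadd u v) = (qform n a u \<noteq> (qform n a v \<noteq> Bf n a u v))"
proof -
  let ?P = "Pset n a"
  have "qform n a (vadd u v) = par ?P (\<lambda>p. (\<lambda>(i,j). u i \<and> u j) p \<noteq>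
     ((\<lambda>(i,j). v i \<and> v j) p \<noteq> (\<lambda>(i,j). (u i \<and> v j) \<noteq> (v i \<and> u j)) p))"
    unfolding qform_par by (rule par_cong) (auto simp: vadd_def)
  also have "\<dots> = (qform n a u \<noteq> (qform n a v \<noteq> Bf n a u v))"
    using par_xor[OF finite_Pset, of n a "\<lambda>(i,j). u i \<and> u j"
        "\<lambda>p. (\<lambda>(i,j). v i \<and> v j) p \<noteq> (\<lambda>(i,j). (u i \<and> v j) \<noteq> (v i \<and> u j)) p"]
      par_xor[OF finite_Pset, of n a "\<lambda>(i,j). v i \<and> v j" "\<lambda>(i,j). (u i \<and> v j) \<noteq> (v i \<and> u j)"]
    by (simp add: qform_par Bf_def)
  finally show ?thesis .
qed

lemma polar_Bf: "polar n a u v = Bf n a u v"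
  by (auto simp: polar_def qform_add)

lemma Bf_add2: "Bf n a u (vadd v w) = (Bf n a u v \<noteq> Bf n a u w)"
proof -
  have "Bf n a u (vadd v w) = par (Pset n a) (\<lambda>p. (\<lambda>(i,j). (u i \<and> v j) \<noteq> (v i \<and> u j)) p \<noteq>
     (\<lambda>(i,j). (u i \<and> w j) \<noteq> (w i \<and> u j)) p)"
    unfolding Bf_def by (rule par_cong) (auto simp: vadd_def)
  then show ?thesis
    using par_xor[OF finite_Pset, of n a "\<lambda>(i,j). (u i \<and> v j) \<noteq> (v i \<and> u j)"
        "\<lambda>(i,j). (u i \<and> w j) \<noteq> (w i \<and> u j)"]
    by (simp add: Bf_def)
qed

lemma Bf_sym: "Bf n a u v = Bf n a v u"
  unfolding Bf_def by (rule par_cong) auto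

lemma Bf_add1: "Bf n a (vadd v w) u = (Bf n a v u \<noteq> Bf n a w u)"
  using Bf_add2 Bf_sym by metis

lemma qform_zero: "qform n a vzero = False"
  by (simp add: qform_def vzero_def)

lemma Bf_zero: "Bf n a vzero u = False"
  using Bf_add1[of n a vzero vzero u] by (simp add: vadd_zero_iff)


definition LS :: "nat \<Rightarrow> (nat \<Rightarrow> bool) set \<Rightarrow> (nat \<Rightarrow> bool) set" where
  "LS n S = \<Inter>{W. lin_subspace n W \<and> S \<subseteq> W}"

lemma lin_vecs: "lin_subspace n (vecs n)"
  by (simp add: lin_subspace_def vzero_vecs vadd_vecs)

lemma LS_lin: "S \<subseteq> vecs n \<Longrightarrow> lin_subspace n (LS n S)"
  unfolding lin_subspace_def LS_def
proof (intro conjI)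
  assume "S \<subseteq> vecs n"
  then show "\<Inter>{W. (W \<subseteq> vecs n \<and> vzero \<in> W \<and> (\<forall>u\<in>W. \<forall>v\<in>W. vadd u v \<in> W)) \<and> S \<subseteq> W} \<subseteq> vecs n"
    using lin_vecs[of n] unfolding lin_subspace_def by blast
qed auto

lemma LS_sub: "S \<subseteq> LS n S"
  by (auto simp: LS_def)

lemma LS_min: "lin_subspace n W \<Longrightarrow> S \<subseteq> W \<Longrightarrow> LS n S \<subseteq> W"
  by (auto simp: LS_def)

lemma vadd_in_span: "x \<in> S \<Longrightarrow> y \<in> S \<Longrightarrow> x \<noteq> y \<Longrightarrow> vadd x y \<in> proj_span n S"
  by (auto simp: proj_span_def lin_subspace_def vadd_zero_iff)

lemma totsing:
  assumes S: "S \<subseteq> vecs n" and q: "\<forall>x\<in>S. \<not> qform n a x"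
    and p: "\<forall>x\<in>S. \<forall>y\<in>S. \<not> polar n a x y"
  shows "\<forall>w\<in>LS n S. \<not> qform n a w"
proof -
  let ?A = "{w\<in>vecs n. \<forall>y\<in>S. \<not> Bf n a w y}"
  have "lin_subspace n ?A"
    by (auto simp: lin_subspace_def vzero_vecs vadd_vecs Bf_zero Bf_add1)
  moreover have "S \<subseteq> ?A" using S p by (auto simp: polar_Bf)
  ultimately have A: "LS n S \<subseteq> ?A" by (rule LS_min)
  have B: "\<not> Bf n a w z" if w: "w \<in> LS n S" and z: "z \<in> LS n S" for w z
  proof -
    let ?D = "{z\<in>vecs n. \<not> Bf n a w z}"
    have "lin_subspace n ?D"
      by (auto simp: lin_subspace_def vzero_vecs vadd_vecs Bf_add2 Bf_sym[of n a w vzero] Bf_zero)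
    moreover have "S \<subseteq> ?D" using S A w by auto
    ultimately have "LS n S \<subseteq> ?D" by (rule LS_min)
    then show ?thesis using z by auto
  qed
  let ?E = "{w\<in>LS n S. \<not> qform n a w}"
  have L: "lin_subspace n (LS n S)" using S by (rule LS_lin)
  have "lin_subspace n ?E"
    using L B unfolding lin_subspace_def by (auto simp: qform_zero qform_add)
  moreover have "S \<subseteq> ?E" using q LS_sub by auto
  ultimately have "LS n S \<subseteq> ?E" by (rule LS_min)
  then show ?thesis by auto
qed

lemma ext_sub:
  assumes W: "lin_subspace n W" and v: "v \<in> vecs n" "v \<notin> W"
  shows "lin_subspace n (W \<union> vadd v ` W) \<and> card (W \<union> vadd v ` W) = 2 * card W"
proof
  show "lin_subspace n (W \<union> vadd v ` W)"
  proof -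
    have sub: "W \<subseteq> vecs n" and z: "vzero \<in> W" and cl: "\<forall>u\<in>W. \<forall>w\<in>W. vadd u w \<in> W"
      using W unfolding lin_subspace_def by auto
    have c: "vadd x y \<in> W \<union> vadd v ` W" if "x \<in> W \<union> vadd v ` W" "y \<in> W \<union> vadd v ` W" for x y
    proof -
      from that obtain x' y' where x': "x' \<in> W" "x = x' \<or> x = vadd v x'"
        and y': "y' \<in> W" "y = y' \<or> y = vadd v y'" by blast
      have xy: "vadd x' y' \<in> W" using cl x' y' by blast
      have e1: "vadd x' (vadd v y') = vadd v (vadd x' y')" by (auto simp: vadd_def fun_eq_iff)
      have e2: "vadd (vadd v x') y' = vadd v (vadd x' y')" by (auto simp: vadd_def fun_eq_iff)
      have e3: "vadd (vadd v x') (vadd v y') = vadd x' y'" by (auto simp: vadd_def fun_eq_iff)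
      show ?thesis using x'(2) y'(2) xy e1 e2 e3 by (elim disjE) auto
    qed
    have "vadd v ` W \<subseteq> vecs n" using sub v by (auto intro: vadd_vecs)
    then show ?thesis using sub z c unfolding lin_subspace_def by auto
  qed
  have fW: "finite W" using W finite_vecs unfolding lin_subspace_def by (metis finite_subset)
  have disj: "W \<inter> vadd v ` W = {}"
  proof (rule ccontr)
    assume "W \<inter> vadd v ` W \<noteq> {}"
    then obtain u w where "u \<in> W" "w \<in> W" "vadd v w = u" by auto
    then have "v = vadd u w" by (metis vadd_assoc vadd_self vadd_cancel)
    then show False using W v \<open>u \<in> W\<close> \<open>w \<in> W\<close> unfolding lin_subspace_def by auto
  qed
  have "inj_on (vadd v) W" by (metis inj_onI vadd_cancel)
  then have "card (vadd v ` W) = card W" by (rule card_image)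
  then show "card (W \<union> vadd v ` W) = 2 * card W"
    using card_Un_disjoint[OF fW _ disj] fW by simp
qed


lemma pow2_aux:
  assumes L: "lin_subspace n L"
  shows "lin_subspace n W \<Longrightarrow> W \<subseteq> L \<Longrightarrow> card W = 2 ^ m \<Longrightarrow> \<exists>m'. card L = 2 ^ m'"
proof (induction "card L - card W" arbitrary: W m rule: less_induct)
  case less
  have fL: "finite L" using L finite_vecs unfolding lin_subspace_def by (metis finite_subset)
  show ?case
  proof (cases "W = L")
    case True then show ?thesis using less by blast
  next
    case False
    then obtain v where v: "v \<in> L" "v \<notin> W" using less.prems(2) by blast
    have vv: "v \<in> vecs n" using v L unfolding lin_subspace_def by auto
    let ?W' = "W \<union> vadd v ` W"
    have e: "lin_subspace n ?W' \<and> card ?W' = 2 * card W" using ext_sub[OF less.prems(1) vv v(2)] .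
    have sub: "?W' \<subseteq> L" using less.prems(2) v L unfolding lin_subspace_def by blast
    have "card ?W' \<le> card L" using sub fL by (rule card_mono[rotated])
    moreover have "card W > 0" using less.prems(3) by simp
    ultimately have "card L - card ?W' < card L - card W" using e by simp
    moreover have "card ?W' = 2 ^ Suc m" using e less.prems(3) by simp
    ultimately show ?thesis using less.hyps e sub by blast
  qed
qed

lemma pow2: "lin_subspace n L \<Longrightarrow> \<exists>m. card L = 2 ^ m"
proof -
  assume L: "lin_subspace n L"
  have "lin_subspace n {vzero}" by (simp add: lin_subspace_def vzero_vecs)
  moreover have "{vzero} \<subseteq> L" using L by (simp add: lin_subspace_def)
  ultimately show ?thesis using pow2_aux[OF L, of "{vzero}" 0] by simp
qed

lemma index_bound: "proj_subspace n d S \<Longrightarrow> d \<le> card (vecs n)"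
proof -
  assume "proj_subspace n d S"
  then have "insert vzero S \<subseteq> vecs n" "card (insert vzero S) = 2 ^ (d+1)"
    by (auto simp: proj_subspace_def lin_subspace_def)
  then have "2 ^ (d+1) \<le> card (vecs n)" using card_mono[OF finite_vecs] by metis
  moreover have "d < 2 ^ d" by (rule less_exp)
  moreover have "(2::nat) ^ d \<le> 2 ^ (d+1)" by simp
  ultimately show ?thesis by linarith
qed

lemma maxl:
  assumes L: "lin_subspace n L" and q: "L - {vzero} \<subseteq> quadric n a"
    and CL: "insert vzero C \<subseteq> L" and cC: "card (insert vzero C) = 2 ^ (proj_index n a + 1)"
  shows "L = insert vzero C"
proof -
  have fL: "finite L" using L finite_vecs unfolding lin_subspace_def by (metis finite_subset)
  obtain m where m: "card L = 2 ^ m" using pow2[OF L] by blast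
  have "card (insert vzero C) \<le> card L" using CL fL by (rule card_mono[rotated])
  then have "2 ^ (proj_index n a + 1) \<le> (2::nat) ^ m" using cC m by simp
  then have m1: "m \<ge> 1"
  proof (cases m)
    case 0
    have "(2::nat) \<le> 2 ^ (proj_index n a + 1)" using power_increasing[of 1 "proj_index n a + 1" "2::nat"] by simp
    moreover have "(2::nat) ^ (proj_index n a + 1) \<le> 1" using \<open>2 ^ (proj_index n a + 1) \<le> (2::nat) ^ m\<close> 0 by simp
    ultimately show ?thesis by linarith
  qed simp
  have z: "vzero \<in> L" using L by (simp add: lin_subspace_def)
  have iL: "insert vzero (L - {vzero}) = L" using z by blast
  have "m - 1 + 1 = m" using m1 by simp
  then have "card (insert vzero (L - {vzero})) = 2 ^ (m - 1 + 1)" using iL m by simp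
  then have ps: "proj_subspace n (m - 1) (L - {vzero})"
    unfolding proj_subspace_def using L iL by simp
  have bd: "\<And>y. (\<exists>S. proj_subspace n y S \<and> S \<subseteq> quadric n a) \<Longrightarrow> y \<le> card (vecs n)"
    using index_bound by blast
  have "m - 1 \<le> proj_index n a"
    unfolding proj_index_def using ps q by (intro Greatest_le_nat[OF _ bd]) blast
  then have "(2::nat) ^ m \<le> 2 ^ (proj_index n a + 1)" using m1
    by (intro power_increasing) auto
  then have "card L \<le> card (insert vzero C)" using m cC by simp
  then have "card (insert vzero C) = card L" using \<open>card (insert vzero C) \<le> card L\<close> by linarith
  then show ?thesis using card_subset_eq[OF fL CL] by simp
qed


lemma polar_zero_lem:
  assumes "\<not> qform n a x" "\<not> qform n a y" "vadd x y \<in> quadric n a \<or> x = y"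
  shows "\<not> polar n a x y"
  using assms by (auto simp: polar_def quadric_def qform_zero)

lemma quadric_vecs: "quadric n a \<subseteq> vecs n"
  by (auto simp: quadric_def pg_points_def)

lemma quadric_nz: "vzero \<notin> quadric n a"
  by (auto simp: quadric_def pg_points_def)

lemma quadric_q: "x \<in> quadric n a \<Longrightarrow> \<not> qform n a x"
  by (auto simp: quadric_def)

theorem lemma5p2:
  fixes n s :: nat and a :: "nat \<Rightarrow> nat \<Rightarrow> bool" and \<alpha> C :: "(nat \<Rightarrow> bool) set"
  assumes "nonsingular n a"
    and "proj_index n a \<ge> 1"
    and "s < proj_index n a"
    and "proj_subspace n s \<alpha>" and "\<alpha> \<subseteq> quadric n a"
    and "gs_clique n a \<alpha> C"
    and "card C = 2 ^ (proj_index n a + 1) - 1"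
    and "\<forall>X\<in>C. \<not> type_iii n a \<alpha> X"
  shows "generator n a C \<and> \<alpha> \<subseteq> C"
proof -
  note aq = assms(5)
  have Cq: "C \<subseteq> quadric n a" using assms(6) by (simp add: gs_clique_def)
  have la: "lin_subspace n (insert vzero \<alpha>)" using assms(4) by (simp add: proj_subspace_def)
  have tii: "type_ii n a \<alpha> X" if "X \<in> C" "X \<notin> \<alpha>" for X
    using that assms(8) Cq by (auto simp: type_iii_def type_i_def)
  let ?S = "C \<union> \<alpha>"
  have Sq: "?S \<subseteq> quadric n a" using Cq aq by auto
  have Sv: "?S \<subseteq> vecs n" using Sq quadric_vecs by blast
  have Sp: "\<not> polar n a x y" if x: "x \<in> ?S" and y: "y \<in> ?S" for x y
  proof (rule polar_zero_lem)
    show "\<not> qform n a x" "\<not> qform n a y" using x y Sq quadric_q by blast+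
    show "vadd x y \<in> quadric n a \<or> x = y"
    proof (cases "x = y")
      case False
      show ?thesis
      proof (cases "x \<in> \<alpha>")
        case xa: True
        show ?thesis
        proof (cases "y \<in> \<alpha>")
          case True
          then have "vadd x y \<in> insert vzero \<alpha>" using xa la by (auto simp: lin_subspace_def)
          then show ?thesis using False aq by (auto simp: vadd_zero_iff)
        next
          case ya: False
          then have "type_ii n a \<alpha> y" using tii y by blast
          moreover have "vadd x y \<in> proj_span n (insert y \<alpha>)"
            using xa False by (intro vadd_in_span) auto
          ultimately show ?thesis by (auto simp: type_ii_def)
        qed
      next
        case xa: False
        show ?thesis
        proof (cases "y \<in> \<alpha>")
          case ya: True
          have "type_ii n a \<alpha> x" using tii x xa by blast
          moreover have "vadd x y \<in> proj_span n (insert x \<alpha>)"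
            using ya False by (intro vadd_in_span) auto
          ultimately show ?thesis by (auto simp: type_ii_def)
        next
          case ya: False
          have xc: "x \<in> C" and yc: "y \<in> C" using x y xa ya by auto
          have tx: "type_ii n a \<alpha> x" and ty: "type_ii n a \<alpha> y" using tii xc yc xa ya by auto
          have nsw: "\<not> switched n a \<alpha> z" if "type_ii n a \<alpha> z" for z
          proof
            assume "switched n a \<alpha> z"
            then have "type_i n a \<alpha> z \<or> type_iii n a \<alpha> z" unfolding switched_def Ys_def by blast
            moreover have "z \<notin> \<alpha>" using that unfolding type_ii_def by blast
            show False
            proof (cases "type_i n a \<alpha> z")
              case True
              then show False using \<open>z \<notin> \<alpha>\<close> unfolding type_i_def by blast
            next
              case False
              then have "type_iii n a \<alpha> z" using \<open>type_i n a \<alpha> z \<or> type_iii n a \<alpha> z\<close> by blast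
              then show False using that unfolding type_iii_def by blast
            qed
          qed
          have "gs_adj n a \<alpha> x y" using assms(6) xc yc False by (auto simp: gs_clique_def)
          moreover have c: "\<not> ((switched n a \<alpha> x \<and> y \<in> Xs n a \<alpha>) \<or> (switched n a \<alpha> y \<and> x \<in> Xs n a \<alpha>))"
            using nsw[OF tx] nsw[OF ty] by blast
          ultimately have "qadj n a x y" unfolding gs_adj_def if_not_P[OF c] by blast
          moreover have "vadd x y \<in> proj_span n {x, y}" using False by (intro vadd_in_span) auto
          ultimately show ?thesis by (auto simp: qadj_def)
        qed
      qed
    qed simp
  qed
  have Sq2: "\<forall>x\<in>?S. \<not> qform n a x" using Sq quadric_q by blast
  have Sp2: "\<forall>x\<in>?S. \<forall>y\<in>?S. \<not> polar n a x y" using Sp by blast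
  have ts: "\<forall>w\<in>LS n ?S. \<not> qform n a w" using totsing[OF Sv Sq2 Sp2] .
  have L: "lin_subspace n (LS n ?S)" using Sv by (rule LS_lin)
  have Lq: "LS n ?S - {vzero} \<subseteq> quadric n a"
  proof
    fix w assume w: "w \<in> LS n ?S - {vzero}"
    then have "w \<in> vecs n" using L unfolding lin_subspace_def by blast
    moreover have "\<not> qform n a w" using ts w by blast
    ultimately show "w \<in> quadric n a" using w unfolding quadric_def pg_points_def by blast
  qed
  have z: "vzero \<notin> C" using Cq quadric_nz by blast
  have fC: "finite C" using Cq quadric_vecs finite_vecs by (metis finite_subset)
  have "(1::nat) \<le> 2 ^ (proj_index n a + 1)" by simp
  then have cC: "card (insert vzero C) = 2 ^ (proj_index n a + 1)"
    using fC z assms(7) by simp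
  have CL: "insert vzero C \<subseteq> LS n ?S" using LS_sub[of ?S n] L by (auto simp: lin_subspace_def)
  have eq: "LS n ?S = insert vzero C" using maxl[OF L Lq CL cC] .
  have "\<alpha> \<subseteq> C" using LS_sub[of ?S n] eq assms(4) by (auto simp: proj_subspace_def)
  moreover have "generator n a C"
  proof -
    have "lin_subspace n (insert vzero C)" using L eq by simp
    then have "proj_subspace n (proj_index n a) C" unfolding proj_subspace_def using z cC by blast
    then show ?thesis unfolding generator_def using Cq by blast
  qed
  ultimately show ?thesis by simp
qed

end
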